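(* For every $n\ge2$ and every $A\subseteq[n]$, $f_n(A)\ge 2f_{n-1}(A)$ and $f_n(A)\ge 2^{n-1}$.
   Context: For $m\ge1$ and a set $B$ of positive integers, $f_m(B)$ denotes the number of linear orders $q$ on $[m]$ such that for every triple $i<j<k$ in $[m]$: if $j\in B$ then $i$ is not ranked last among $\{i,j,k\}$ in $q$, and if $j\notin B$ then $k$ is not ranked first among $\{i,j,k\}$ in $q$. *)

theory Defs
  imports Main
begin

text \<open>A linear order q on [m] = {1..m} is a (reflexive) relation with linear_order_on {1..m} q;
  (x,y) \<in> q means x is ranked no later than y. "i is ranked last among {i,j,k}" means
  (j,i) \<in> q and (k,i) \<in> q; "k is ranked first among {i,j,k}" means (k,i) \<in> q and (k,j) \<in> q.\<close>

definition f :: "nat \<Rightarrow> nat set \<Rightarrow> nat" where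
  "f m B = card {q. linear_order_on {1..m} q \<and>
     (\<forall>i j k. 1 \<le> i \<and> i < j \<and> j < k \<and> k \<le> m \<longrightarrow>
        (j \<in> B \<longrightarrow> \<not> ((j, i) \<in> q \<and> (k, i) \<in> q)) \<and>
        (j \<notin> B \<longrightarrow> \<not> ((k, i) \<in> q \<and> (k, j) \<in> q)))}"

end

theory Submission imports Defs begin

definition ins :: "nat set \<Rightarrow> (nat \<times> nat) set \<Rightarrow> nat set \<Rightarrow> nat \<Rightarrow> (nat \<times> nat) set" where
  "ins S q D n = q \<union> (D \<times> {n}) \<union> ({n} \<times> (S - D)) \<union> {(n,n)}"

lemma ins_lin:
  assumes "linear_order_on S q" "D \<subseteq> S" "\<And>x y. (y,x) \<in> q \<Longrightarrow> x \<in> D \<Longrightarrow> y \<in> D" "n \<notin> S"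
  shows "linear_order_on (insert n S) (ins S q D n)"
proof -
  have sub: "q \<subseteq> S \<times> S" and rf: "\<forall>x\<in>S. (x,x) \<in> q" and tr: "trans q" and an: "antisym q"
    and tot: "\<forall>x\<in>S. \<forall>y\<in>S. x \<noteq> y \<longrightarrow> (x, y) \<in> q \<or> (y, x) \<in> q"
    using assms(1) unfolding order_on_defs refl_on_def total_on_def by auto
  show ?thesis
    unfolding order_on_defs refl_on_def total_on_def
  proof (intro conjI)
    show "ins S q D n \<subseteq> insert n S \<times> insert n S" using sub assms(2) by (auto simp: ins_def)
    show "\<forall>x\<in>insert n S. (x, x) \<in> ins S q D n" using rf by (auto simp: ins_def)
    show "trans (ins S q D n)"
    proof (rule transI)
      fix x y z assume a: "(x,y) \<in> ins S q D n" "(y,z) \<in> ins S q D n"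
      show "(x,z) \<in> ins S q D n"
      proof (cases "x = n"; cases "y = n"; cases "z = n")
        assume "x \<noteq> n" "y \<noteq> n" "z \<noteq> n"
        then show ?thesis using a tr unfolding ins_def trans_def by blast
      next
        assume "x \<noteq> n" "y = n" "z \<noteq> n"
        then have "x \<in> D" "z \<in> S" "z \<notin> D" using a sub assms(4) unfolding ins_def by auto
        then have "x \<noteq> z" "x \<in> S" using assms(2) by auto
        then have "(x,z) \<in> q" using tot assms(3) \<open>x \<in> D\<close> \<open>z \<in> S\<close> \<open>z \<notin> D\<close> by blast
        then show ?thesis unfolding ins_def by blast
      next
        assume "x = n" "y \<noteq> n" "z \<noteq> n"
        then have "y \<in> S - D" "(y,z) \<in> q" using a sub assms(4) unfolding ins_def by auto
        then have "z \<in> S - D" using assms(3) sub by blast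
        then show ?thesis using \<open>x = n\<close> unfolding ins_def by blast
      next
        assume "x \<noteq> n" "y \<noteq> n" "z = n"
        then have "(x,y) \<in> q" "y \<in> D" using a sub assms(4) unfolding ins_def by auto
        then have "x \<in> D" using assms(3) by blast
        then show ?thesis using \<open>z = n\<close> unfolding ins_def by blast
      qed (use a sub assms(4) in \<open>auto simp: ins_def\<close>)
    qed
    show "antisym (ins S q D n)"
      using an sub assms(2,4) unfolding ins_def antisym_def by blast
    show "\<forall>x\<in>insert n S. \<forall>y\<in>insert n S. x \<noteq> y \<longrightarrow> (x, y) \<in> ins S q D n \<or> (y, x) \<in> ins S q D n"
      using tot unfolding ins_def by blast
  qed
qed

lemma ins_restrict: "q \<subseteq> S \<times> S \<Longrightarrow> n \<notin> S \<Longrightarrow> ins S q D n \<inter> (S \<times> S) = q"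
  unfolding ins_def by blast

lemma mem_img: "(\<And>x. g (g x) = x) \<Longrightarrow> ((a,b) \<in> map_prod g g ` r) = ((g a, g b) \<in> r)"
  by (auto simp: image_iff) (metis map_prod_simp)

lemma img_lin:
  assumes "linear_order_on S r" "\<And>x. g (g x) = x" "\<And>x. x \<in> S \<Longrightarrow> g x \<in> S"
  shows "linear_order_on S (map_prod g g ` r)"
proof -
  have sub: "r \<subseteq> S \<times> S" and rf: "\<forall>x\<in>S. (x,x) \<in> r" and tr: "trans r" and an: "antisym r"
    and tot: "\<forall>x\<in>S. \<forall>y\<in>S. x \<noteq> y \<longrightarrow> (x, y) \<in> r \<or> (y, x) \<in> r"
    using assms(1) unfolding order_on_defs refl_on_def total_on_def by auto
  show ?thesis
    unfolding order_on_defs refl_on_def total_on_def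
  proof (intro conjI)
    show "map_prod g g ` r \<subseteq> S \<times> S" using sub assms(3) by auto
    show "\<forall>x\<in>S. (x, x) \<in> map_prod g g ` r" using rf assms(3) by (auto simp: mem_img[OF assms(2)])
    show "trans (map_prod g g ` r)" using tr unfolding trans_def by (auto simp: mem_img[OF assms(2)])
    show "antisym (map_prod g g ` r)" using an unfolding antisym_def by (auto simp: mem_img[OF assms(2)]) (metis assms(2))
    show "\<forall>x\<in>S. \<forall>y\<in>S. x \<noteq> y \<longrightarrow> (x, y) \<in> map_prod g g ` r \<or> (y, x) \<in> map_prod g g ` r"
      using tot assms by (auto simp: mem_img[OF assms(2)]) (metis assms(2))
  qed
qed

definition cond :: "nat \<Rightarrow> nat set \<Rightarrow> (nat \<times> nat) set \<Rightarrow> bool" where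
  "cond m B q \<longleftrightarrow> (\<forall>i j k. 1 \<le> i \<and> i < j \<and> j < k \<and> k \<le> m \<longrightarrow>
        (j \<in> B \<longrightarrow> \<not> ((j, i) \<in> q \<and> (k, i) \<in> q)) \<and>
        (j \<notin> B \<longrightarrow> \<not> ((k, i) \<in> q \<and> (k, j) \<in> q)))"

definition V :: "nat \<Rightarrow> nat set \<Rightarrow> (nat \<times> nat) set set" where
  "V m B = {q. linear_order_on {1..m} q \<and> cond m B q}"

lemma f_V: "f m B = card (V m B)"
  unfolding f_def V_def cond_def by simp

lemma finite_V: "finite (V m B)"
proof (rule finite_subset)
  show "V m B \<subseteq> Pow ({1..m} \<times> {1..m})" unfolding V_def order_on_defs by auto
qed auto

lemma card_two:
  assumes "finite W" "inj_on a X" "inj_on b X" "a ` X \<subseteq> W" "b ` X \<subseteq> W"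
    "\<And>x y. x \<in> X \<Longrightarrow> y \<in> X \<Longrightarrow> a x \<noteq> b y"
  shows "2 * card X \<le> card W"
proof -
  have d: "a ` X \<inter> b ` X = {}" using assms(6) by auto
  have fa: "finite (a ` X)" "finite (b ` X)" using assms(1,4,5) finite_subset by auto
  have "card (a ` X \<union> b ` X) = card (a ` X) + card (b ` X)"
    using card_Un_disjoint[OF fa d] .
  also have "\<dots> = 2 * card X" using card_image[OF assms(2)] card_image[OF assms(3)] by simp
  finally show ?thesis using card_mono[OF assms(1)] assms(4,5) by (metis Un_subset_iff)
qed

lemma ins_mem:
  assumes "q \<subseteq> S \<times> S" "n \<notin> S" "D \<subseteq> S"
  shows "a \<noteq> n \<Longrightarrow> b \<noteq> n \<Longrightarrow> (a,b) \<in> ins S q D n \<longleftrightarrow> (a,b) \<in> q"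
    and "b \<noteq> n \<Longrightarrow> (n,b) \<in> ins S q D n \<longleftrightarrow> b \<in> S - D"
    and "a \<noteq> n \<Longrightarrow> (a,n) \<in> ins S q D n \<longleftrightarrow> a \<in> D"
  using assms unfolding ins_def by auto

lemma ins_cond:
  assumes "q \<subseteq> {1..m} \<times> {1..m}" "D \<subseteq> {1..m}" "cond m B q"
    and "\<And>i j. 1 \<le> i \<Longrightarrow> i < j \<Longrightarrow> j \<le> m \<Longrightarrow>
      (j \<in> B \<longrightarrow> \<not> ((j, i) \<in> ins {1..m} q D (Suc m) \<and> (Suc m, i) \<in> ins {1..m} q D (Suc m))) \<and>
      (j \<notin> B \<longrightarrow> \<not> ((Suc m, i) \<in> ins {1..m} q D (Suc m) \<and> (Suc m, j) \<in> ins {1..m} q D (Suc m)))"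
  shows "cond (Suc m) B (ins {1..m} q D (Suc m))"
  unfolding cond_def
proof (intro allI impI)
  fix i j k assume h: "1 \<le> i \<and> i < j \<and> j < k \<and> k \<le> Suc m"
  show "(j \<in> B \<longrightarrow> \<not> ((j, i) \<in> ins {1..m} q D (Suc m) \<and> (k, i) \<in> ins {1..m} q D (Suc m))) \<and>
        (j \<notin> B \<longrightarrow> \<not> ((k, i) \<in> ins {1..m} q D (Suc m) \<and> (k, j) \<in> ins {1..m} q D (Suc m)))"
  proof (cases "k = Suc m")
    case True
    then show ?thesis using assms(4)[of i j] h by auto
  next
    case False
    then have "k \<le> m" using h by auto
    have ne: "i \<noteq> Suc m" "j \<noteq> Suc m" "k \<noteq> Suc m" using h \<open>k \<le> m\<close> by auto
    have c: "(j \<in> B \<longrightarrow> \<not> ((j, i) \<in> q \<and> (k, i) \<in> q)) \<and> (j \<notin> B \<longrightarrow> \<not> ((k, i) \<in> q \<and> (k, j) \<in> q))"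
      using assms(3) h \<open>k \<le> m\<close> unfolding cond_def by blast
    show ?thesis using c ins_mem(1)[OF assms(1) _ assms(2)] ne by simp
  qed
qed

lemma step2:
  assumes m1: "1 \<le> m"
  shows "2 * card (V m A) \<le> card (V (Suc m) A)"
proof -
  have Sn: "insert (Suc m) {1..m} = {1..Suc m}" by auto
  have nS: "Suc m \<notin> {1..m}" by simp
  have lin: "linear_order_on {1..m} q" if "q \<in> V m A" for q using that unfolding V_def by auto
  have sub: "q \<subseteq> {1..m} \<times> {1..m}" if "q \<in> V m A" for q
    using lin[OF that] unfolding order_on_defs by auto
  have cq: "cond m A q" if "q \<in> V m A" for q using that unfolding V_def by auto
  have rfl: "(x,x) \<in> q" if "q \<in> V m A" "x \<in> {1..m}" for q x
    using lin[OF that(1)] that(2) unfolding order_on_defs refl_on_def by auto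
  have tot: "(x,y) \<in> q \<or> (y,x) \<in> q" if "q \<in> V m A" "x \<in> {1..m}" "y \<in> {1..m}" for q x y
    using lin[OF that(1)] that(2,3) rfl[OF that(1)] unfolding order_on_defs total_on_def by metis
  have ant: "x = y" if "q \<in> V m A" "(x,y) \<in> q" "(y,x) \<in> q" for q x y
    using lin[OF that(1)] that(2,3) unfolding order_on_defs antisym_def by auto
  have trn: "(x,z) \<in> q" if "q \<in> V m A" "(x,y) \<in> q" "(y,z) \<in> q" for q x y z
    using lin[OF that(1)] that(2,3) unfolding order_on_defs trans_def by blast
  define p1 where "p1 q = ins {1..m} q {1..m} (Suc m)" for q
  have p1V: "p1 q \<in> V (Suc m) A" if q: "q \<in> V m A" for q
  proof -
    have "linear_order_on {1..Suc m} (p1 q)"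
      unfolding p1_def Sn[symmetric]
      by (rule ins_lin[OF lin[OF q]]) (use sub[OF q] in auto)
    moreover have "cond (Suc m) A (p1 q)"
      unfolding p1_def
    proof (rule ins_cond[OF sub[OF q] _ cq[OF q]])
      fix i j assume h: "1 \<le> i" "i < j" "j \<le> m"
      have "(Suc m, i) \<notin> ins {1..m} q {1..m} (Suc m)"
        using ins_mem(2)[OF sub[OF q] nS, of "{1..m}" i] h by auto
      then show "(j \<in> A \<longrightarrow> \<not> ((j, i) \<in> ins {1..m} q {1..m} (Suc m) \<and> (Suc m, i) \<in> ins {1..m} q {1..m} (Suc m))) \<and>
          (j \<notin> A \<longrightarrow> \<not> ((Suc m, i) \<in> ins {1..m} q {1..m} (Suc m) \<and> (Suc m, j) \<in> ins {1..m} q {1..m} (Suc m)))"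
        by blast
    qed simp
    ultimately show ?thesis unfolding V_def by simp
  qed
  have p1inj: "inj_on p1 (V m A)"
    by (rule inj_onI) (metis p1_def ins_restrict sub nS)
  have p1P: "(y, Suc m) \<in> p1 q" if "q \<in> V m A" "y \<in> {1..m}" for q y
    using ins_mem(3)[OF sub[OF that(1)] nS, of "{1..m}" y] that(2) unfolding p1_def by auto
  have p1n: "(Suc m, y) \<notin> p1 q" if "q \<in> V m A" "y \<in> {1..m}" for q y
    using ins_mem(2)[OF sub[OF that(1)] nS, of "{1..m}" y] that(2) unfolding p1_def by auto
  show ?thesis
  proof (cases "m \<in> A")
    case True
    define g where "g x = (if x = m then Suc m else if x = Suc m then m else x)" for x
    have gg: "g (g x) = x" for x unfolding g_def by auto
    have gS: "g x \<in> {1..Suc m}" if "x \<in> {1..Suc m}" for x using that m1 unfolding g_def by auto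
    define p2 where "p2 q = map_prod g g ` p1 q" for q
    have p2V: "p2 q \<in> V (Suc m) A" if q: "q \<in> V m A" for q
    proof -
      have l1: "linear_order_on {1..Suc m} (p1 q)" using p1V[OF q] unfolding V_def by auto
      have c1: "cond (Suc m) A (p1 q)" using p1V[OF q] unfolding V_def by auto
      have "linear_order_on {1..Suc m} (p2 q)" unfolding p2_def
        by (rule img_lin[OF l1 gg gS])
      moreover have "cond (Suc m) A (p2 q)"
        unfolding cond_def p2_def mem_img[OF gg]
      proof (intro allI impI)
        fix i j k assume h: "1 \<le> i \<and> i < j \<and> j < k \<and> k \<le> Suc m"
        show "(j \<in> A \<longrightarrow> \<not> ((g j, g i) \<in> p1 q \<and> (g k, g i) \<in> p1 q)) \<and>
              (j \<notin> A \<longrightarrow> \<not> ((g k, g i) \<in> p1 q \<and> (g k, g j) \<in> p1 q))"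
        proof (cases "j = m")
          case True
          then have "g i = i" "g j = Suc m" using h unfolding g_def by auto
          then show ?thesis using p1n[OF q, of i] h True \<open>m \<in> A\<close> by auto
        next
          case False
          then have e: "g i = i" "g j = j" "j < g k" "g k \<le> Suc m" using h unfolding g_def by auto
          then show ?thesis using c1 h unfolding cond_def by metis
        qed
      qed
      ultimately show ?thesis unfolding V_def by simp
    qed
    have p2inj: "inj_on p2 (V m A)"
    proof (rule inj_onI)
      fix x y assume "x \<in> V m A" "y \<in> V m A" "p2 x = p2 y"
      then have "map_prod g g ` p2 x = map_prod g g ` p2 y" by simp
      moreover have "map_prod g g ` p2 z = p1 z" for z
        proof -
        have hid: "(\<lambda>x. map_prod g g (map_prod g g x)) = id" by (auto simp: gg)
        show ?thesis unfolding p2_def image_image hid image_id by simp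
      qed
      ultimately have "p1 x = p1 y" by simp
      then show "x = y" using p1inj \<open>x \<in> V m A\<close> \<open>y \<in> V m A\<close> by (meson inj_onD)
    qed
    have p2n: "(m, Suc m) \<notin> p2 q" if "q \<in> V m A" for q
      unfolding p2_def mem_img[OF gg] using p1n[OF that, of m] m1 unfolding g_def by simp
    show ?thesis
      by (rule card_two[OF finite_V p1inj p2inj]) (use p1V p2V p1P p2n m1 in fastforce)+
  next
    case False
    define D where "D q = (if \<forall>y\<in>{1..m}. (y,m) \<in> q then {1..m} - {m} else {x. (x,m) \<in> q})" for q
    define p2 where "p2 q = ins {1..m} q (D q) (Suc m)" for q
    have DS: "D q \<subseteq> {1..m}" if "q \<in> V m A" for q using sub[OF that] unfolding D_def by auto
    have p2V: "p2 q \<in> V (Suc m) A" if q: "q \<in> V m A" for q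
    proof -
      have "linear_order_on {1..Suc m} (p2 q)"
        unfolding p2_def Sn[symmetric]
      proof (rule ins_lin[OF lin[OF q] DS[OF q] _ nS])
        fix x y assume a: "(y, x) \<in> q" "x \<in> D q"
        show "y \<in> D q"
        proof (cases "\<forall>y\<in>{1..m}. (y,m) \<in> q")
          case True
          have "y \<in> {1..m}" using a sub[OF q] by auto
          moreover have "y \<noteq> m"
          proof
            assume "y = m"
            moreover have "(x,m) \<in> q" using True a(2) unfolding D_def by auto
            ultimately have "x = m" using ant[OF q] a(1) by auto
            then show False using a(2) True unfolding D_def by auto
          qed
          ultimately show ?thesis using True unfolding D_def by auto
        next
          case False
          then have "D q = {x. (x,m) \<in> q}" unfolding D_def by auto
          then show ?thesis using a trn[OF q] by auto
        qed
      qed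
      moreover have "cond (Suc m) A (p2 q)"
        unfolding p2_def
      proof (rule ins_cond[OF sub[OF q] DS[OF q] cq[OF q]])
        fix i j assume h: "1 \<le> i" "i < j" "j \<le> m"
        have mem2: "(Suc m, b) \<in> ins {1..m} q (D q) (Suc m) \<longleftrightarrow> b \<in> {1..m} - D q" if "b \<noteq> Suc m" for b
          using ins_mem(2)[OF sub[OF q] nS DS[OF q] that] .
        have mem1: "(a, b) \<in> ins {1..m} q (D q) (Suc m) \<longleftrightarrow> (a,b) \<in> q" if "a \<noteq> Suc m" "b \<noteq> Suc m" for a b
          using ins_mem(1)[OF sub[OF q] nS DS[OF q] that] .
        show "(j \<in> A \<longrightarrow> \<not> ((j, i) \<in> ins {1..m} q (D q) (Suc m) \<and> (Suc m, i) \<in> ins {1..m} q (D q) (Suc m))) \<and>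
          (j \<notin> A \<longrightarrow> \<not> ((Suc m, i) \<in> ins {1..m} q (D q) (Suc m) \<and> (Suc m, j) \<in> ins {1..m} q (D q) (Suc m)))"
        proof (cases "\<forall>y\<in>{1..m}. (y,m) \<in> q")
          case True
          then have "i \<in> D q" using h unfolding D_def by auto
          then show ?thesis using mem2[of i] h by auto
        next
          case F: False
          have Dq: "D q = {x. (x,m) \<in> q}" using F unfolding D_def by auto
          have ni: "(m, b) \<in> q" if "b \<in> {1..m} - D q" for b
          proof -
            have "b \<noteq> m" using that rfl[OF q, of m] m1 Dq by auto
            then show ?thesis using tot[OF q, of b m] that m1 Dq by auto
          qed
          show ?thesis
          proof (cases "j = m")
            case True
            have "m \<in> D q" using rfl[OF q, of m] m1 Dq by auto
            then show ?thesis using mem2[of m] True False by auto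
          next
            case jm: False
            have c: "(j \<in> A \<longrightarrow> \<not> ((j, i) \<in> q \<and> (m, i) \<in> q)) \<and> (j \<notin> A \<longrightarrow> \<not> ((m, i) \<in> q \<and> (m, j) \<in> q))"
            proof -
              have "i < j \<and> j < m \<and> m \<le> m" using h jm by auto
              then show ?thesis using cq[OF q] h(1) unfolding cond_def by blast
            qed
            show ?thesis using c mem1[of j i] mem2[of i] mem2[of j] ni[of i] ni[of j] h by auto
          qed
        qed
      qed
      ultimately show ?thesis unfolding V_def by simp
    qed
    have p2inj: "inj_on p2 (V m A)"
      by (rule inj_onI) (metis p2_def ins_restrict sub nS)
    have p2n: "\<exists>y\<in>{1..m}. (y, Suc m) \<notin> p2 q" if q: "q \<in> V m A" for q
    proof (cases "\<forall>y\<in>{1..m}. (y,m) \<in> q")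
      case True
      then show ?thesis using ins_mem(3)[OF sub[OF q] nS DS[OF q], of m] m1
        unfolding p2_def D_def by auto
    next
      case F: False
      then obtain y where y: "y \<in> {1..m}" "(y,m) \<notin> q" by auto
      have Dq: "D q = {x. (x,m) \<in> q}" using F unfolding D_def by auto
      have "(y, Suc m) \<notin> p2 q" using ins_mem(3)[OF sub[OF q] nS DS[OF q], of y] y
        unfolding p2_def Dq by auto
      then show ?thesis using y by blast
    qed
    show ?thesis
      by (rule card_two[OF finite_V p1inj p2inj]) (use p1V p2V p1P p2n in fastforce)+
  qed
qed

lemma base1: "1 \<le> card (V 1 B)"
proof -
  have "{(1,1)} \<in> V 1 B" unfolding V_def cond_def by auto
  then have "V 1 B \<noteq> {}" by auto
  then show ?thesis using finite_V by (simp add: Suc_le_eq card_gt_0_iff)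
qed

lemma pow: "1 \<le> n \<Longrightarrow> 2 ^ (n - 1) \<le> card (V n B)"
proof (induction n rule: dec_induct)
  case base
  then show ?case using base1 by simp
next
  case (step m)
  then have "2 ^ (Suc m - 1) = 2 * 2 ^ (m - 1)" by (cases m) auto
  also have "\<dots> \<le> 2 * card (V m B)" using step by simp
  also have "\<dots> \<le> card (V (Suc m) B)" using step2[OF step.hyps(1)] by simp
  finally show ?case .
qed

theorem corollary1:
  fixes n :: nat and A :: "nat set"
  assumes "n \<ge> 2" and "A \<subseteq> {1..n}"
  shows "f n A \<ge> 2 * f (n - 1) A \<and> f n A \<ge> 2 ^ (n - 1)"
proof -
  obtain m where n: "n = Suc m" and m: "1 \<le> m" using assms(1) by (cases n) auto
  show ?thesis unfolding f_V n using step2[OF m, of A] pow[of "Suc m" A] by simp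
qed

end
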